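(* Consider $\min_xF(x)=f(x)+r(x)$ with $f=\frac1n\sum_{i=1}^nf_i$, each $f_i$ differentiable with $\|\nabla f_i(x)\|\le G_i$ where $0<G_1\le\dots\le G_n$, $\nabla f_i$ $L_i$-Lipschitz, $r$ possibly non-convex non-smooth with existing proximal mapping, $F$ attaining its minimum $F(x^* )$, $\tilde L=\frac1n\sum_iL_i>0$. Let $b\in\{1,\dots,n\}$, let $k$ be the largest integer in $[n]$ with $0<b+k-n\le\frac{\sum_{j=1}^kG_j}{G_k}$, and set $p_i=(b+k-n)\frac{G_i}{\sum_{j=1}^kG_j}$ for $i\le k$ and $p_i=1$ for $i>k$. Run ProxSGD with independent sampling with these probabilities and stepsize $0<\eta<\frac1{2\tilde L}$: $g_t=\sum_{i\in S_t}\frac1{np_i}\nabla f_i(x_t)$, $x_{t+1}\in\mathrm{prox}_{\eta r}(x_t-\eta g_t)$. Then for all $T\ge1$, $$\frac1T\sum_{t=1}^TE\big[\mathrm{dist}(0,\hat\partial F(x_{t+1}))^2\big]\le\frac{C_1}{n^2}\cdot\frac{1}{b+k-n}\Big(\sum_{i=1}^kG_i\Big)^2+\frac{C_2}{T}\Delta,$$ where $C_1=\frac{1+4\tilde L\eta-2\tilde L^2\eta^2}{\tilde L\eta-2\tilde L^2\eta^2}$, $C_2=\frac{2+4\tilde L\eta+4\tilde L^2\eta^2}{\eta-2\tilde L\eta^2}$, $\Delta=F(x_1)-F(x^* )$.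
   Context: Independent sampling: at each iteration, each $i\in[n]$ is included in $S_t$ independently with probability $p_i$, independently of all past randomness. $\mathrm{prox}_{\eta r}(y)=\arg\min_x\{\frac1{2\eta}\|x-y\|^2+r(x)\}$ (nonempty). $\hat\partial F$ is the Fréchet subdifferential, $\hat\partial F(x)=\{v:\liminf_{\bar x\to x}\frac{F(\bar x)-F(x)-v^\top(\bar x-x)}{\|\bar x-x\|}\ge0\}$, $\mathrm{dist}(0,A)=\inf_{v\in A}\|v\|$. *)

theory Defs
  imports "HOL-Probability.Probability"
begin

definition prox :: "real \<Rightarrow> ('a::real_normed_vector \<Rightarrow> real) \<Rightarrow> 'a \<Rightarrow> 'a set" where
  "prox \<eta> r y = {x. \<forall>z. (1 / (2*\<eta>)) * (norm (x - y))^2 + r x \<le> (1 / (2*\<eta>)) * (norm (z - y))^2 + r z}"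

definition frechet_subdiff :: "('a::real_inner \<Rightarrow> real) \<Rightarrow> 'a \<Rightarrow> 'a set" where
  "frechet_subdiff F x = {v. Liminf (at x) (\<lambda>y. ereal ((F y - F x - inner v (y - x)) / norm (y - x))) \<ge> 0}"

text \<open>Distance from the origin to a set, valued in ennreal (infinite for the empty set).\<close>
definition dist0 :: "'a::real_normed_vector set \<Rightarrow> ennreal" where
  "dist0 A = (INF v\<in>A. ennreal (norm v))"

end

theory Submission
  imports Defs
begin


lemma smooth_ub:
  fixes \<phi> :: "'a::real_inner \<Rightarrow> real"
  assumes d: "\<And>y. (\<phi> has_derivative (\<lambda>h. inner (\<gamma> y) h)) (at y)"
    and l: "\<And>y z. norm (\<gamma> y - \<gamma> z) \<le> K * norm (y - z)"
  shows "\<phi> y \<le> \<phi> x + inner (\<gamma> x) (y - x) + K/2 * (norm (y-x))^2"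
proof -
  define h where "h = y - x"
  define \<psi> where "\<psi> \<tau> = \<phi> (x + \<tau> *\<^sub>R h) - \<tau> * inner (\<gamma> x) h - K/2 * \<tau>^2 * (norm h)^2" for \<tau>
  have D: "(\<psi> has_real_derivative (inner (\<gamma> (x + \<tau> *\<^sub>R h)) h - inner (\<gamma> x) h - K * \<tau> * (norm h)^2)) (at \<tau>)" for \<tau>
  proof -
    have 1: "((\<lambda>\<tau>. x + \<tau> *\<^sub>R h) has_derivative (\<lambda>u. u *\<^sub>R h)) (at \<tau>)"
      by (auto intro!: derivative_eq_intros)
    have 2: "((\<lambda>\<tau>. \<phi> (x + \<tau> *\<^sub>R h)) has_derivative (\<lambda>u. inner (\<gamma> (x + \<tau> *\<^sub>R h)) (u *\<^sub>R h))) (at \<tau>)"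
      using has_derivative_compose[OF 1 d] by simp
    have 3: "(\<lambda>u. inner (\<gamma> (x + \<tau> *\<^sub>R h)) (u *\<^sub>R h)) = (*) (inner (\<gamma> (x + \<tau> *\<^sub>R h)) h)"
      by (auto simp: fun_eq_iff)
    have "((\<lambda>\<tau>. \<phi> (x + \<tau> *\<^sub>R h)) has_real_derivative inner (\<gamma> (x + \<tau> *\<^sub>R h)) h) (at \<tau>)"
      using 2 unfolding 3 has_field_derivative_def .
    then show ?thesis unfolding \<psi>_def 
      by (auto intro!: derivative_eq_intros)
  qed
  have "\<psi> 1 \<le> \<psi> 0"
  proof (rule DERIV_nonpos_imp_nonincreasing[of 0 1])
    fix \<tau> :: real assume t: "0 \<le> \<tau>" "\<tau> \<le> 1"
    have "inner (\<gamma> (x + \<tau> *\<^sub>R h)) h - inner (\<gamma> x) h = inner (\<gamma> (x + \<tau> *\<^sub>R h) - \<gamma> x) h"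
      by (simp add: inner_diff_left)
    also have "\<dots> \<le> norm (\<gamma> (x + \<tau> *\<^sub>R h) - \<gamma> x) * norm h"
      by (rule norm_cauchy_schwarz)
    also have "\<dots> \<le> (K * norm (\<tau> *\<^sub>R h)) * norm h"
      using l[of "x + \<tau> *\<^sub>R h" x] by (intro mult_right_mono) auto
    also have "\<dots> = K * \<tau> * (norm h)^2"
      using t by (simp add: power2_eq_square)
    finally show "\<exists>y. (\<psi> has_real_derivative y) (at \<tau>) \<and> y \<le> 0"
      using D by (intro exI[of _ "inner (\<gamma> (x + \<tau> *\<^sub>R h)) h - inner (\<gamma> x) h - K * \<tau> * (norm h)^2"]) auto
  qed simp
  then show ?thesis unfolding \<psi>_def h_def by simp
qed

lemma norm_add_sq:
  fixes a b :: "'a::real_inner"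
  shows "(norm (a + b))^2 = (norm a)^2 + 2 * inner a b + (norm b)^2"
  by (simp add: power2_norm_eq_inner inner_add_left inner_add_right inner_commute[of b a])

lemma real_aux:
  fixes N A e :: real
  assumes "N > 0"
  shows "(A - N^2/(2*e))/N = inverse N * A - N/(2*e)"
  using assms by (simp add: field_simps power2_eq_square)

lemma frechet_mem:
  fixes \<phi> r :: "'a::euclidean_space \<Rightarrow> real"
  assumes d: "(\<phi> has_derivative (\<lambda>h. inner \<gamma> h)) (at x0)"
    and p: "x0 \<in> prox \<eta> r w" and \<eta>: "\<eta> > 0"
  shows "\<gamma> - (1/\<eta>) *\<^sub>R (x0 - w) \<in> frechet_subdiff (\<lambda>y. \<phi> y + r y) x0"
proof -
  define v where "v = \<gamma> - (1/\<eta>) *\<^sub>R (x0 - w)"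
  define R where "R y = ((\<phi> y - \<phi> x0) - inner \<gamma> (y - x0)) /\<^sub>R norm (y - x0) - norm (y - x0) / (2*\<eta>)" for y
  define Q where "Q y = ((\<phi> y + r y) - (\<phi> x0 + r x0) - inner v (y - x0)) / norm (y - x0)" for y
  have l1: "((\<lambda>y. ((\<phi> y - \<phi> x0) - inner \<gamma> (y - x0)) /\<^sub>R norm (y - x0)) \<longlongrightarrow> 0) (at x0)"
    using d unfolding has_derivative_at_within by simp
  have l2: "((\<lambda>y. norm (y - x0) / (2*\<eta>)) \<longlongrightarrow> 0) (at x0)"
  proof -
    have "((\<lambda>y. norm (y - x0) / (2*\<eta>)) \<longlongrightarrow> norm (x0 - x0) / (2*\<eta>)) (at x0)"
      using \<eta> by (intro tendsto_intros) auto
    then show ?thesis by simp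
  qed
  have Req: "R = (\<lambda>y. ((\<phi> y - \<phi> x0) - inner \<gamma> (y - x0)) /\<^sub>R norm (y - x0) - norm (y - x0) / (2*\<eta>))"
    unfolding R_def ..
  have "(R \<longlongrightarrow> 0 - 0) (at x0)" unfolding Req by (rule tendsto_diff[OF l1 l2])
  then have "((\<lambda>y. ereal (R y)) \<longlongrightarrow> ereal 0) (at x0)"
    by (intro tendsto_ereal) simp
  then have lim0: "Liminf (at x0) (\<lambda>y. ereal (R y)) = ereal 0"
    by (intro lim_imp_Liminf) simp_all
  have lim: "Liminf (at x0) (\<lambda>y. ereal (R y)) = 0" using lim0 by (simp add: zero_ereal_def)
  have key: "R y \<le> Q y" if "y \<noteq> x0" for y
  proof -
    have ny: "norm (y - x0) > 0" using that by simp
    have pr: "(1 / (2*\<eta>)) * (norm (x0 - w))^2 + r x0 \<le> (1 / (2*\<eta>)) * (norm (y - w))^2 + r y"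
      using p unfolding prox_def by blast
    have ex: "(norm (y - w))^2 = (norm (y - x0))^2 + 2 * inner (y - x0) (x0 - w) + (norm (x0 - w))^2"
    proof -
      have s: "y - x0 + (x0 - w) = y - w" by simp
      show ?thesis using norm_add_sq[of "y - x0" "x0 - w"] unfolding s .
    qed
    define A where "A = (norm (y - x0))^2"
    define B where "B = inner (y - x0) (x0 - w)"
    define C where "C = (norm (x0 - w))^2"
    have e2: "(1/(2*\<eta>)) * (A + 2*B + C) = A/(2*\<eta>) + (1/\<eta>)*B + C/(2*\<eta>)"
      using \<eta> by (simp add: field_simps)
    have e3: "(1/(2*\<eta>)) * C = C/(2*\<eta>)" by simp
    have "r y - r x0 + (1/\<eta>) * B \<ge> - A / (2*\<eta>)"
      using pr unfolding ex A_def[symmetric] B_def[symmetric] C_def[symmetric] e2 e3 by linarith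
    then have "r y - r x0 + inner ((1/\<eta>) *\<^sub>R (x0 - w)) (y - x0) \<ge> - ((norm (y - x0))^2) / (2*\<eta>)"
      unfolding A_def B_def by (simp add: inner_commute)
    then have "(\<phi> y + r y) - (\<phi> x0 + r x0) - inner v (y - x0) \<ge> (\<phi> y - \<phi> x0 - inner \<gamma> (y - x0)) - (norm (y - x0))^2 / (2*\<eta>)"
      unfolding v_def by (simp add: inner_diff_left)
    then have "((\<phi> y - \<phi> x0 - inner \<gamma> (y - x0)) - (norm (y - x0))^2 / (2*\<eta>)) / norm (y - x0) \<le> Q y"
      unfolding Q_def using ny by (simp add: divide_right_mono)
    moreover have "((\<phi> y - \<phi> x0 - inner \<gamma> (y - x0)) - (norm (y - x0))^2 / (2*\<eta>)) / norm (y - x0) = R y"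
      unfolding R_def real_scaleR_def using real_aux[OF ny] by simp
    ultimately show ?thesis by simp
  qed
  have ne: "eventually (\<lambda>y. y \<noteq> x0) (at x0)" by (simp add: eventually_at_filter)
  have "eventually (\<lambda>y. ereal (R y) \<le> ereal (Q y)) (at x0)"
    using ne by (rule eventually_mono) (simp add: key)
  then have "Liminf (at x0) (\<lambda>y. ereal (R y)) \<le> Liminf (at x0) (\<lambda>y. ereal (Q y))"
    by (rule Liminf_mono)
  then have L: "0 \<le> Liminf (at x0) (\<lambda>y. ereal (Q y))" unfolding lim .
  have "v \<in> frechet_subdiff (\<lambda>y. \<phi> y + r y) x0"
    unfolding frechet_subdiff_def mem_Collect_eq using L unfolding Q_def .
  then show ?thesis unfolding v_def .
qed

lemma dist0_le: "v \<in> A \<Longrightarrow> dist0 A \<le> ennreal (norm v)"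
  unfolding dist0_def by (rule INF_lower)



lemma real_alg:
  fixes L \<eta> U N E P V D :: real
  assumes L: "L > 0" and \<eta>: "\<eta> > 0" and sL: "L*\<eta> < 1/2"
    and V: "0 \<le> V" "V \<le> L * N + U" and U: "0 \<le> U" and N: "0 \<le> N" and E: "0 \<le> E"
    and U2: "U^2 = E^2 + (2/\<eta>) * P + N^2 / \<eta>^2"
    and P: "- (N * E) \<le> P"
    and desc: "P + (1/(2*\<eta>) - L/2) * N^2 \<le> D"
  shows "V^2 \<le> (1+L*\<eta>)*(3-2*L*\<eta>)/(1-2*L*\<eta>) * E^2 + 2*(1+L*\<eta>)/(\<eta>*(1-2*L*\<eta>)) * D"
proof -
  define sg where "sg = L*\<eta>"
  have s0: "sg > 0" unfolding sg_def using L \<eta> by simp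
  have s1: "1 - 2* sg > 0" unfolding sg_def using sL by simp
  have S1: "V^2 \<le> (L*N + U)^2" using V by (intro power_mono) auto
  have y1: "sg*U^2 + (L*N)^2/sg - 2*(L*N)*U = (sg*U - L*N)^2 / sg"
    using s0 by (simp add: field_simps power2_eq_square)
  have "0 \<le> (sg*U - L*N)^2 / sg" using s0 by simp
  then have "2*(L*N)*U \<le> sg*U^2 + (L*N)^2/sg" using y1 by linarith
  then have S2: "V^2 \<le> (1+sg)*U^2 + (L*N)^2/sg + (L*N)^2"
    using S1 by (simp add: power2_eq_square algebra_simps)
  have y2: "E^2/(2*L) + L*N^2/2 - N*E = (E - L*N)^2/(2*L)"
    using L by (simp add: field_simps power2_eq_square)
  have "0 \<le> (E - L*N)^2/(2*L)" using L by simp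
  then have S3: "P \<ge> - (E^2/(2*L)) - L*N^2/2" using y2 P by linarith
  have "(1/(2*\<eta>) - L) * N^2 \<le> D + E^2/(2*L)"
    using desc S3 by (simp add: algebra_simps)
  moreover have "(1/(2*\<eta>) - L) = (1-2* sg)/(2*\<eta>)" unfolding sg_def using \<eta> by (simp add: field_simps)
  ultimately have "(1-2* sg)/(2*\<eta>) * N^2 \<le> D + E^2/(2*L)" by simp
  then have "(2*\<eta>)/(1-2* sg) * ((1-2* sg)/(2*\<eta>) * N^2) \<le> (2*\<eta>)/(1-2* sg) * (D + E^2/(2*L))"
    using s1 \<eta> by (intro mult_left_mono) auto
  then have S4: "N^2 \<le> (2*\<eta>)/(1-2* sg) * (D + E^2/(2*L))"
    using s1 \<eta> by simp
  have "(2/\<eta>) * P \<le> (2/\<eta>) * (D - (1/(2*\<eta>) - L/2) * N^2)"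
    using desc \<eta> by (intro mult_left_mono) auto
  moreover have "(2/\<eta>) * (D - (1/(2*\<eta>) - L/2) * N^2) = 2*D/\<eta> - N^2/\<eta>^2 + L*N^2/\<eta>"
    using \<eta> by (simp add: field_simps power2_eq_square)
  ultimately have S5: "U^2 \<le> E^2 + 2*D/\<eta> + L*N^2/\<eta>" using U2 by linarith
  have y3: "(L*N)^2/sg + (L*N)^2 = (1+sg)*(L/\<eta>) * N^2"
    unfolding sg_def using L \<eta> by (simp add: field_simps power2_eq_square)
  have "V^2 \<le> (1+sg)*(E^2 + 2*D/\<eta> + L*N^2/\<eta>) + (1+sg)*(L/\<eta>) * N^2"
    using S2 S5 y3 s0 by (smt (verit) mult_left_mono)
  also have "\<dots> = (1+sg)*E^2 + 2*(1+sg)*D/\<eta> + (2*(1+sg)*L/\<eta>) * N^2"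
    by (simp add: algebra_simps)
  also have "\<dots> \<le> (1+sg)*E^2 + 2*(1+sg)*D/\<eta> + (2*(1+sg)*L/\<eta>) * ((2*\<eta>)/(1-2* sg) * (D + E^2/(2*L)))"
    using S4 s0 L \<eta> by (intro add_left_mono mult_left_mono) auto
  also have "\<dots> = (1+sg)*(3-2* sg)/(1-2* sg) * E^2 + 2*(1+sg)/(\<eta>*(1-2* sg)) * D"
  proof -
    have Leq: "L = sg/\<eta>" unfolding sg_def using \<eta> by simp
    have ne: "1 - 2 * sg \<noteq> 0" using s1 by simp
    have T: "(2*(1+sg)*L/\<eta>) * ((2*\<eta>)/(1-2 * sg) * (D + E^2/(2*L))) = 4*(1+sg)*L/(1-2 * sg) * D + 2*(1+sg)/(1-2 * sg) * E^2"
    proof -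
      define q where "q = 1 - 2 * sg"
      have q: "q \<noteq> 0" unfolding q_def using ne .
      have "(2*(1+sg)*L/\<eta>) * ((2*\<eta>)/q * (D + E^2/(2*L))) = 4*(1+sg)*L/q * D + 2*(1+sg)/q * E^2"
        using L \<eta> q by (simp add: field_simps)
      then show ?thesis unfolding q_def .
    qed
    have c1: "(1+sg) + 2*(1+sg)/(1-2 * sg) = (1+sg)*(3-2 * sg)/(1-2 * sg)"
      using ne by (simp add: field_simps)
    have c2: "2*(1+sg)/\<eta> + 4*(1+sg)*L/(1-2 * sg) = 2*(1+sg)/(\<eta>*(1-2 * sg))"
      unfolding Leq using ne \<eta> by (simp add: field_simps)
    have c3: "2*(1+sg)*D/\<eta> = 2*(1+sg)/\<eta>*D" by simp
    have "((1+sg) + 2*(1+sg)/(1-2 * sg)) * E^2 + (2*(1+sg)/\<eta> + 4*(1+sg)*L/(1-2 * sg)) * D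
       = (1+sg)*E^2 + 2*(1+sg)*D/\<eta> + (2*(1+sg)*L/\<eta>) * ((2*\<eta>)/(1-2 * sg) * (D + E^2/(2*L)))"
      unfolding T c3 by (simp only: distrib_right)
    then show ?thesis unfolding c1 c2 by simp
  qed
  finally show ?thesis unfolding sg_def by (simp add: mult.assoc)
qed



lemma (in prob_space) integral_if_pred:
  assumes m: "P \<in> measurable M (count_space UNIV)"
  shows "(\<integral>\<omega>. (if P \<omega> then c else d) \<partial>M) = c * measure M {\<omega>\<in>space M. P \<omega>} + d * (1 - measure M {\<omega>\<in>space M. P \<omega>})"
proof -
  define S where "S = {\<omega>\<in>space M. P \<omega>}"
  have S: "S \<in> sets M"
  proof -
    have "P -` {True} \<inter> space M \<in> sets M" using m by (intro measurable_sets) auto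
    moreover have "P -` {True} \<inter> space M = S" unfolding S_def by auto
    ultimately show ?thesis by simp
  qed
  have "(\<integral>\<omega>. (if P \<omega> then c else d) \<partial>M) = (\<integral>\<omega>. d + (c - d) * indicator S \<omega> \<partial>M)"
    by (intro Bochner_Integration.integral_cong) (auto simp: S_def indicator_def)
  also have "\<dots> = d + (c - d) * measure M S"
  proof -
    have i1: "integrable M (\<lambda>\<omega>. (c - d) * indicator S \<omega> :: real)"
      using S by (intro integrable_mult_right integrable_real_indicator) (auto simp: emeasure_eq_measure)
    have "(\<integral>\<omega>. d + (c - d) * indicator S \<omega> \<partial>M) = (\<integral>\<omega>. d \<partial>M) + (\<integral>\<omega>. (c - d) * indicator S \<omega> \<partial>M)"
      by (rule Bochner_Integration.integral_add[OF integrable_const i1])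
    also have "\<dots> = d + (c - d) * measure M S"
      using S by (simp add: prob_space)
    finally show ?thesis .
  qed
  finally show ?thesis unfolding S_def[symmetric] by (simp add: algebra_simps)
qed

lemma norm_sum_sq:
  fixes v :: "'i \<Rightarrow> 'b::real_inner"
  shows "(norm (\<Sum>i\<in>I. c i *\<^sub>R v i))^2 = (\<Sum>i\<in>I. \<Sum>j\<in>I. (c i * c j) * inner (v i) (v j))"
proof -
  have "inner (\<Sum>i\<in>I. c i *\<^sub>R v i) (\<Sum>j\<in>I. c j *\<^sub>R v j) = (\<Sum>i\<in>I. inner (c i *\<^sub>R v i) (\<Sum>j\<in>I. c j *\<^sub>R v j))"
    by (rule inner_sum_left)
  also have "\<dots> = (\<Sum>i\<in>I. \<Sum>j\<in>I. inner (c i *\<^sub>R v i) (c j *\<^sub>R v j))"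
    by (simp only: inner_sum_right)
  also have "\<dots> = (\<Sum>i\<in>I. \<Sum>j\<in>I. (c i * c j) * inner (v i) (v j))"
    by (simp add: mult_ac)
  finally show ?thesis unfolding power2_norm_eq_inner .
qed

lemma sigma_sets_comp_sub:
  assumes X: "X \<in> measurable M MX" and Y: "Y \<in> measurable MX N"
  shows "sigma_sets (space M) {(\<lambda>\<omega>. Y (X \<omega>)) -` C \<inter> space M | C. C \<in> sets N}
         \<subseteq> sigma_sets (space M) {X -` C \<inter> space M | C. C \<in> sets MX}"
proof (rule sigma_sets_subseteq, safe)
  fix C assume C: "C \<in> sets N"
  have "(\<lambda>\<omega>. Y (X \<omega>)) -` C \<inter> space M = X -` (Y -` C \<inter> space MX) \<inter> space M"
    using measurable_space[OF X] by auto
  moreover have "Y -` C \<inter> space MX \<in> sets MX" using measurable_sets[OF Y C] .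
  ultimately show "\<exists>C'. (\<lambda>\<omega>. Y (X \<omega>)) -` C \<inter> space M = X -` C' \<inter> space M \<and> C' \<in> sets MX"
    by blast
qed

lemma (in prob_space) indep_set_compose:
  assumes ind: "indep_set (sigma_sets (space M) {A -` C \<inter> space M | C. C \<in> sets MA})
                          (sigma_sets (space M) {B -` C \<inter> space M | C. C \<in> sets MB})"
    and A: "A \<in> measurable M MA" and B: "B \<in> measurable M MB"
    and Y1: "Y1 \<in> measurable MA N1" and Y2: "Y2 \<in> measurable MB N2"
  shows "indep_set (sigma_sets (space M) {(\<lambda>\<omega>. Y1 (A \<omega>)) -` C \<inter> space M | C. C \<in> sets N1})
                   (sigma_sets (space M) {(\<lambda>\<omega>. Y2 (B \<omega>)) -` C \<inter> space M | C. C \<in> sets N2})"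
  using ind unfolding indep_set_def
  by (rule indep_sets_mono_sets)
     (auto split: bool.split intro: sigma_sets_comp_sub[OF A Y1, THEN subsetD] sigma_sets_comp_sub[OF B Y2, THEN subsetD])

lemma (in prob_space) var_bound:
  fixes \<xi> :: "nat \<Rightarrow> 'a \<Rightarrow> bool" and X :: "'a \<Rightarrow> 'c::topological_space"
    and \<gamma> :: "nat \<Rightarrow> 'c \<Rightarrow> 'b::euclidean_space"
  assumes ind: "indep_vars (\<lambda>_. count_space UNIV) \<xi> I"
    and fin: "finite I"
    and pr: "\<And>i. i \<in> I \<Longrightarrow> measure M {\<omega>\<in>space M. \<xi> i \<omega>} = p i"
    and pp: "\<And>i. i \<in> I \<Longrightarrow> p i > 0"
    and indX: "indep_set (sigma_sets (space M) {(\<lambda>\<omega>. \<lambda>i\<in>I. \<xi> i \<omega>) -` C \<inter> space M | C. C \<in> sets (PiM I (\<lambda>_. count_space UNIV))})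
                         (sigma_sets (space M) {X -` C \<inter> space M | C. C \<in> sets borel})"
    and Xm: "X \<in> borel_measurable M"
    and \<gamma>m: "\<And>i. i \<in> I \<Longrightarrow> \<gamma> i \<in> borel_measurable borel"
    and \<gamma>b: "\<And>i y. i \<in> I \<Longrightarrow> norm (\<gamma> i y) \<le> B i"
  shows "(\<integral>\<^sup>+\<omega>. ennreal ((norm (\<Sum>i\<in>I. ((if \<xi> i \<omega> then 1 / p i else 0) - 1) *\<^sub>R \<gamma> i (X \<omega>)))^2) \<partial>M)
         \<le> ennreal (\<Sum>i\<in>I. (1 / p i - 1) * (B i)^2)"
proof -
  define zf where "zf i b = (if b then 1 / p i else 0) - (1::real)" for i b
  define z where "z i \<omega> = zf i (\<xi> i \<omega>)" for i \<omega>
  define w where "w i \<omega> = \<gamma> i (X \<omega>)" for i \<omega>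
  have \<xi>m: "\<xi> i \<in> measurable M (count_space UNIV)" if "i \<in> I" for i
    using ind that unfolding indep_vars_def by auto
  have Am: "(\<lambda>\<omega>. \<lambda>i\<in>I. \<xi> i \<omega>) \<in> measurable M (PiM I (\<lambda>_. count_space UNIV))"
    using \<xi>m by (intro measurable_restrict) auto
  have zm: "z i \<in> borel_measurable M" if "i \<in> I" for i
  proof -
    have "(zf i) \<circ> (\<xi> i) \<in> borel_measurable M"
      by (rule measurable_comp[OF \<xi>m[OF that]]) simp
    then show ?thesis unfolding z_def comp_def .
  qed
  have wm: "w i \<in> borel_measurable M" if "i \<in> I" for i
  proof -
    have "(\<gamma> i) \<circ> X \<in> borel_measurable M"
      by (rule measurable_comp[OF Xm \<gamma>m[OF that]])
    then show ?thesis unfolding w_def comp_def .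
  qed
  have B0: "0 \<le> B i" if "i \<in> I" for i using \<gamma>b[OF that] norm_ge_zero order_trans by blast
  have zb: "\<bar>z i \<omega>\<bar> \<le> 1 / p i + 1" if "i \<in> I" for i \<omega>
  proof -
    have "0 < 1 / p i" using pp[OF that] by simp
    then have q: "\<bar>1 / p i - 1\<bar> \<le> 1 / p i + 1" by (simp only: abs_le_iff) linarith
    show ?thesis unfolding z_def zf_def using q \<open>0 < 1 / p i\<close> by (cases "\<xi> i \<omega>") auto
  qed
  have wb: "norm (w i \<omega>) \<le> B i" if "i \<in> I" for i \<omega>
    unfolding w_def using \<gamma>b[OF that] .
  define T where "T i j \<omega> = (z i \<omega> * z j \<omega>) * inner (w i \<omega>) (w j \<omega>)" for i j \<omega>
  have fun_eq: "(norm (\<Sum>i\<in>I. ((if \<xi> i \<omega> then 1 / p i else 0) - 1) *\<^sub>R \<gamma> i (X \<omega>)))^2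
      = (\<Sum>i\<in>I. \<Sum>j\<in>I. T i j \<omega>)" for \<omega>
    unfolding norm_sum_sq T_def z_def zf_def w_def ..
  have zzm: "(\<lambda>\<omega>. z i \<omega> * z j \<omega>) \<in> borel_measurable M" if "i \<in> I" "j \<in> I" for i j
    using zm that by measurable
  have wwm: "(\<lambda>\<omega>. inner (w i \<omega>) (w j \<omega>)) \<in> borel_measurable M" if "i \<in> I" "j \<in> I" for i j
    using wm that by measurable
  have zzi: "integrable M (\<lambda>\<omega>. z i \<omega> * z j \<omega>)" if "i \<in> I" "j \<in> I" for i j
  proof (rule integrable_const_bound[where B="(1 / p i + 1) * (1 / p j + 1)"])
    show "AE x in M. norm (z i x * z j x) \<le> (1 / p i + 1) * (1 / p j + 1)"
    proof (intro AE_I2)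
      fix x
      have "\<bar>z i x\<bar> * \<bar>z j x\<bar> \<le> (1 / p i + 1) * (1 / p j + 1)"
        by (rule mult_mono[OF zb[OF that(1)] zb[OF that(2)]]) (use pp[OF that(1)] in auto)
      then show "norm (z i x * z j x) \<le> (1 / p i + 1) * (1 / p j + 1)" by (simp add: abs_mult)
    qed
  qed (rule zzm[OF that])
  have wwi: "integrable M (\<lambda>\<omega>. inner (w i \<omega>) (w j \<omega>))" if "i \<in> I" "j \<in> I" for i j
  proof (rule integrable_const_bound[where B="B i * B j"])
    show "AE x in M. norm (inner (w i x) (w j x)) \<le> B i * B j"
    proof (intro AE_I2)
      fix x
      have "norm (inner (w i x) (w j x)) \<le> norm (w i x) * norm (w j x)"
        using Cauchy_Schwarz_ineq2 by simp
      also have "\<dots> \<le> B i * B j" using wb that B0 by (intro mult_mono) auto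
      finally show "norm (inner (w i x) (w j x)) \<le> B i * B j" .
    qed
  qed (rule wwm[OF that])
  have Tind: "indep_var borel (\<lambda>\<omega>. z i \<omega> * z j \<omega>) borel (\<lambda>\<omega>. inner (w i \<omega>) (w j \<omega>))"
    if "i \<in> I" "j \<in> I" for i j
  proof -
    have m1: "(\<lambda>a. zf i (a i) * zf j (a j)) \<in> measurable (PiM I (\<lambda>_. count_space UNIV)) borel"
    proof -
      have "(\<lambda>a. a i) \<in> measurable (PiM I (\<lambda>_. count_space UNIV)) (count_space UNIV)"
        by (rule measurable_component_singleton[OF that(1)])
      moreover have "(\<lambda>a. a j) \<in> measurable (PiM I (\<lambda>_. count_space UNIV)) (count_space UNIV)"
        by (rule measurable_component_singleton[OF that(2)])
      ultimately have "(zf i \<circ> (\<lambda>a. a i)) \<in> borel_measurable (PiM I (\<lambda>_. count_space UNIV))"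
        "(zf j \<circ> (\<lambda>a. a j)) \<in> borel_measurable (PiM I (\<lambda>_. count_space UNIV))"
        by (auto intro!: measurable_comp)
      then show ?thesis unfolding comp_def by measurable
    qed
    have m2: "(\<lambda>y. inner (\<gamma> i y) (\<gamma> j y)) \<in> borel_measurable borel"
      using \<gamma>m that by measurable
    have "indep_set (sigma_sets (space M) {(\<lambda>\<omega>. (\<lambda>a. zf i (a i) * zf j (a j)) ((\<lambda>\<omega>. \<lambda>i\<in>I. \<xi> i \<omega>) \<omega>)) -` C \<inter> space M | C. C \<in> sets borel})
                    (sigma_sets (space M) {(\<lambda>\<omega>. (\<lambda>y. inner (\<gamma> i y) (\<gamma> j y)) (X \<omega>)) -` C \<inter> space M | C. C \<in> sets borel})"
      by (rule indep_set_compose[OF indX Am Xm m1 m2])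
    moreover have "(\<lambda>\<omega>. (\<lambda>a. zf i (a i) * zf j (a j)) ((\<lambda>\<omega>. \<lambda>i\<in>I. \<xi> i \<omega>) \<omega>)) = (\<lambda>\<omega>. z i \<omega> * z j \<omega>)"
      using that by (auto simp: z_def fun_eq_iff)
    moreover have "(\<lambda>\<omega>. (\<lambda>y. inner (\<gamma> i y) (\<gamma> j y)) (X \<omega>)) = (\<lambda>\<omega>. inner (w i \<omega>) (w j \<omega>))"
      by (auto simp: w_def fun_eq_iff)
    ultimately show ?thesis using zzm[OF that] wwm[OF that] unfolding indep_var_eq by simp
  qed
  have Ti: "integrable M (T i j)" if "i \<in> I" "j \<in> I" for i j
    unfolding T_def[abs_def] by (rule indep_var_integrable[OF Tind[OF that] zzi[OF that] wwi[OF that]])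
  have Tint: "(\<integral>\<omega>. T i j \<omega> \<partial>M) = (\<integral>\<omega>. z i \<omega> * z j \<omega> \<partial>M) * (\<integral>\<omega>. inner (w i \<omega>) (w j \<omega>) \<partial>M)"
    if "i \<in> I" "j \<in> I" for i j
    unfolding T_def by (rule indep_var_lebesgue_integral[OF Tind[OF that] zzi[OF that] wwi[OF that]])
  have zint: "(\<integral>\<omega>. z i \<omega> \<partial>M) = 0" if "i \<in> I" for i
  proof -
    have "(\<integral>\<omega>. z i \<omega> \<partial>M) = (\<integral>\<omega>. (if \<xi> i \<omega> then 1 / p i - 1 else -1) \<partial>M)"
      unfolding z_def zf_def by (intro Bochner_Integration.integral_cong) auto
    also have "\<dots> = 0"
      using pp[OF that] unfolding integral_if_pred[OF \<xi>m[OF that], of "1 / p i - 1" "-1"] pr[OF that]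
      by (simp add: field_simps)
    finally show ?thesis .
  qed
  have zz_off: "(\<integral>\<omega>. z i \<omega> * z j \<omega> \<partial>M) = 0" if "i \<in> I" "j \<in> I" "i \<noteq> j" for i j
  proof -
    have "indep_var (PiM {i} (\<lambda>_. count_space UNIV)) (\<lambda>\<omega>. restrict (\<lambda>i. \<xi> i \<omega>) {i})
                    (PiM {j} (\<lambda>_. count_space UNIV)) (\<lambda>\<omega>. restrict (\<lambda>i. \<xi> i \<omega>) {j})"
      using that by (intro indep_var_restrict[OF ind]) auto
    moreover have "(\<lambda>a. zf i (a i)) \<in> borel_measurable (PiM {i} (\<lambda>_. count_space UNIV))"
    proof -
      have "(zf i \<circ> (\<lambda>a. a i)) \<in> borel_measurable (PiM {i} (\<lambda>_. count_space UNIV))"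
        by (intro measurable_comp[OF measurable_component_singleton]) auto
      then show ?thesis unfolding comp_def .
    qed
    moreover have "(\<lambda>a. zf j (a j)) \<in> borel_measurable (PiM {j} (\<lambda>_. count_space UNIV))"
    proof -
      have "(zf j \<circ> (\<lambda>a. a j)) \<in> borel_measurable (PiM {j} (\<lambda>_. count_space UNIV))"
        by (intro measurable_comp[OF measurable_component_singleton]) auto
      then show ?thesis unfolding comp_def .
    qed
    ultimately have "indep_var borel ((\<lambda>a. zf i (a i)) \<circ> (\<lambda>\<omega>. restrict (\<lambda>i. \<xi> i \<omega>) {i}))
                    borel ((\<lambda>a. zf j (a j)) \<circ> (\<lambda>\<omega>. restrict (\<lambda>i. \<xi> i \<omega>) {j}))"
      by (rule indep_var_compose)
    moreover have "((\<lambda>a. zf i (a i)) \<circ> (\<lambda>\<omega>. restrict (\<lambda>i. \<xi> i \<omega>) {i})) = z i"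
      by (auto simp: z_def fun_eq_iff)
    moreover have "((\<lambda>a. zf j (a j)) \<circ> (\<lambda>\<omega>. restrict (\<lambda>i. \<xi> i \<omega>) {j})) = z j"
      by (auto simp: z_def fun_eq_iff)
    ultimately have iv: "indep_var borel (z i) borel (z j)" by simp
    have zi: "integrable M (z k)" if "k \<in> I" for k
      using zb[OF that] zm[OF that] by (intro integrable_const_bound[where B="1 / p k + 1"]) auto
    have "(\<integral>\<omega>. z i \<omega> * z j \<omega> \<partial>M) = (\<integral>\<omega>. z i \<omega> \<partial>M) * (\<integral>\<omega>. z j \<omega> \<partial>M)"
      by (rule indep_var_lebesgue_integral[OF iv zi[OF that(1)] zi[OF that(2)]])
    then show ?thesis using zint that by simp
  qed
  have zz_diag: "(\<integral>\<omega>. z i \<omega> * z i \<omega> \<partial>M) = 1 / p i - 1" if "i \<in> I" for i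
  proof -
    have "(\<integral>\<omega>. z i \<omega> * z i \<omega> \<partial>M) = (\<integral>\<omega>. (if \<xi> i \<omega> then (1 / p i - 1) * (1 / p i - 1) else 1) \<partial>M)"
      unfolding z_def zf_def by (intro Bochner_Integration.integral_cong) auto
    also have "\<dots> = 1 / p i - 1"
      using pp[OF that] unfolding integral_if_pred[OF \<xi>m[OF that], of "(1 / p i - 1) * (1 / p i - 1)" 1] pr[OF that]
      by (simp add: field_simps)
    finally show ?thesis .
  qed
  have ww_diag: "(\<integral>\<omega>. inner (w i \<omega>) (w i \<omega>) \<partial>M) \<le> (B i)^2" if "i \<in> I" for i
  proof -
    have "(\<integral>\<omega>. inner (w i \<omega>) (w i \<omega>) \<partial>M) \<le> (\<integral>\<omega>. (B i)^2 \<partial>M)"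
    proof (rule integral_mono[OF wwi[OF that that]])
      fix \<omega>
      show "inner (w i \<omega>) (w i \<omega>) \<le> (B i)^2"
        unfolding power2_norm_eq_inner[symmetric] using wb[OF that] by (intro power_mono) auto
    qed simp
    then show ?thesis by (simp add: prob_space)
  qed
  have p1: "p i \<le> 1" if "i \<in> I" for i using pr[OF that] prob_le_1 by metis
  have int_eq: "(\<integral>\<omega>. (\<Sum>i\<in>I. \<Sum>j\<in>I. T i j \<omega>) \<partial>M) = (\<Sum>i\<in>I. \<Sum>j\<in>I. (\<integral>\<omega>. T i j \<omega> \<partial>M))"
    using Ti by (simp add: Bochner_Integration.integral_sum)
  also have "\<dots> = (\<Sum>i\<in>I. (1 / p i - 1) * (\<integral>\<omega>. inner (w i \<omega>) (w i \<omega>) \<partial>M))"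
  proof (rule sum.cong[OF refl])
    fix i assume i: "i \<in> I"
    have "(\<Sum>j\<in>I. (\<integral>\<omega>. T i j \<omega> \<partial>M)) = (\<Sum>j\<in>I. if j = i then (1 / p i - 1) * (\<integral>\<omega>. inner (w i \<omega>) (w i \<omega>) \<partial>M) else 0)"
      using i by (intro sum.cong refl) (auto simp: Tint zz_off zz_diag)
    also have "\<dots> = (1 / p i - 1) * (\<integral>\<omega>. inner (w i \<omega>) (w i \<omega>) \<partial>M)"
      using i fin by simp
    finally show "(\<Sum>j\<in>I. (\<integral>\<omega>. T i j \<omega> \<partial>M)) = (1 / p i - 1) * (\<integral>\<omega>. inner (w i \<omega>) (w i \<omega>) \<partial>M)" .
  qed
  also have "\<dots> \<le> (\<Sum>i\<in>I. (1 / p i - 1) * (B i)^2)"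
  proof (rule sum_mono)
    fix i assume i: "i \<in> I"
    have "0 \<le> 1 / p i - 1" using p1[OF i] pp[OF i] by simp
    with ww_diag[OF i] show "(1 / p i - 1) * (\<integral>\<omega>. inner (w i \<omega>) (w i \<omega>) \<partial>M) \<le> (1 / p i - 1) * (B i)^2"
      by (intro mult_left_mono)
  qed
  finally have le: "(\<integral>\<omega>. (\<Sum>i\<in>I. \<Sum>j\<in>I. T i j \<omega>) \<partial>M) \<le> (\<Sum>i\<in>I. (1 / p i - 1) * (B i)^2)" .
  have "(\<integral>\<^sup>+\<omega>. ennreal ((norm (\<Sum>i\<in>I. ((if \<xi> i \<omega> then 1 / p i else 0) - 1) *\<^sub>R \<gamma> i (X \<omega>)))^2) \<partial>M)
      = (\<integral>\<^sup>+\<omega>. ennreal (\<Sum>i\<in>I. \<Sum>j\<in>I. T i j \<omega>) \<partial>M)"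
    unfolding fun_eq ..
  also have "\<dots> = ennreal (\<integral>\<omega>. (\<Sum>i\<in>I. \<Sum>j\<in>I. T i j \<omega>) \<partial>M)"
  proof (rule nn_integral_eq_integral)
    show "integrable M (\<lambda>\<omega>. \<Sum>i\<in>I. \<Sum>j\<in>I. T i j \<omega>)"
    proof (rule Bochner_Integration.integrable_sum)
      fix i assume i: "i \<in> I"
      show "integrable M (\<lambda>\<omega>. \<Sum>j\<in>I. T i j \<omega>)"
      proof (rule Bochner_Integration.integrable_sum)
        fix j assume j: "j \<in> I"
        show "integrable M (T i j)" by (rule Ti[OF i j])
      qed
    qed
    show "AE x in M. 0 \<le> (\<Sum>i\<in>I. \<Sum>j\<in>I. T i j x)"
    proof (rule AE_I2)
      fix x
      show "0 \<le> (\<Sum>i\<in>I. \<Sum>j\<in>I. T i j x)" unfolding fun_eq[of x, symmetric] by simp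
    qed
  qed
  also have "\<dots> \<le> ennreal (\<Sum>i\<in>I. (1 / p i - 1) * (B i)^2)"
    using le by (rule ennreal_leI)
  finally show ?thesis .
qed


lemma telescope_real:
  fixes h :: "nat \<Rightarrow> real"
  shows "(\<Sum>t=1..T. h t - h (Suc t)) = h 1 - h (Suc T)"
  by (induct T) simp_all

theorem corollary4p2p3:
  fixes n b k :: nat
    and f :: "nat \<Rightarrow> 'a::euclidean_space \<Rightarrow> real"
    and grad :: "nat \<Rightarrow> 'a \<Rightarrow> 'a"
    and G L p :: "nat \<Rightarrow> real"
    and r :: "'a \<Rightarrow> real"
    and F :: "'a \<Rightarrow> real"
    and xstar x1 :: 'a
    and \<eta> Ltil :: real
    and M :: "'w measure"
    and \<xi> :: "nat \<Rightarrow> nat \<Rightarrow> 'w \<Rightarrow> bool"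
    and x :: "nat \<Rightarrow> 'w \<Rightarrow> 'a"
    and T :: nat
  defines "F \<equiv> (\<lambda>y. (1 / real n) * (\<Sum>i=1..n. f i y) + r y)"
    and "Ltil \<equiv> (1 / real n) * (\<Sum>i=1..n. L i)"
  assumes deriv: "\<And>i y. i \<in> {1..n} \<Longrightarrow> (f i has_derivative (\<lambda>h. inner (grad i y) h)) (at y)"
    and grad_bd: "\<And>i y. i \<in> {1..n} \<Longrightarrow> norm (grad i y) \<le> G i"
    and G_pos: "0 < G 1"
    and G_mono: "\<And>i j. 1 \<le> i \<Longrightarrow> i \<le> j \<Longrightarrow> j \<le> n \<Longrightarrow> G i \<le> G j"
    and lip: "\<And>i y z. i \<in> {1..n} \<Longrightarrow> norm (grad i y - grad i z) \<le> L i * norm (y - z)"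
    and prox_ne: "\<And>y. prox \<eta> r y \<noteq> {}"
    and xstar_min: "\<And>y. F xstar \<le> F y"
    and Ltil_pos: "Ltil > 0"
    and b_range: "b \<in> {1..n}"
    and k_range: "k \<in> {1..n}"
    and k_cond: "0 < real b + real k - real n"
                "real b + real k - real n \<le> (\<Sum>j=1..k. G j) / G k"
    and k_greatest: "\<And>k'. k' \<in> {1..n} \<Longrightarrow> 0 < real b + real k' - real n \<Longrightarrow>
                       real b + real k' - real n \<le> (\<Sum>j=1..k'. G j) / G k' \<Longrightarrow> k' \<le> k"
    and p_def: "\<And>i. p i = (if i \<le> k then (real b + real k - real n) * G i / (\<Sum>j=1..k. G j) else 1)"
    and eta: "0 < \<eta>" "\<eta> < 1 / (2 * Ltil)"
    and M: "prob_space M"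
    and sample_prob: "\<And>t i. t \<ge> 1 \<Longrightarrow> i \<in> {1..n} \<Longrightarrow>
                        measure M {\<omega> \<in> space M. \<xi> t i \<omega>} = p i"
    and sample_indep: "\<And>t. t \<ge> 1 \<Longrightarrow>
        prob_space.indep_vars M (\<lambda>_. count_space UNIV) (\<lambda>i. \<xi> t i) {1..n}"
    and sample_rv: "\<And>t i. t \<ge> 1 \<Longrightarrow> i \<in> {1..n} \<Longrightarrow> \<xi> t i \<in> measurable M (count_space UNIV)"
    and iter_rv: "\<And>t. t \<ge> 1 \<Longrightarrow> x t \<in> borel_measurable M"
    and past_indep: "\<And>t. t \<ge> 1 \<Longrightarrow>
        prob_space.indep_set M
          (sets (vimage_algebra (space M) (\<lambda>\<omega>. \<lambda>i\<in>{1..n}. \<xi> t i \<omega>)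
                  (PiM {1..n} (\<lambda>_. count_space UNIV))))
          (sets (vimage_algebra (space M)
                  (\<lambda>\<omega>. ((\<lambda>s\<in>{1..<t}. \<lambda>i\<in>{1..n}. \<xi> s i \<omega>), (\<lambda>s\<in>{1..t}. x s \<omega>)))
                  (PiM {1..<t} (\<lambda>_. PiM {1..n} (\<lambda>_. count_space UNIV)) \<Otimes>\<^sub>M PiM {1..t} (\<lambda>_. borel))))"
    and init: "\<And>\<omega>. \<omega> \<in> space M \<Longrightarrow> x 1 \<omega> = x1"
    and step: "\<And>t \<omega>. t \<ge> 1 \<Longrightarrow> \<omega> \<in> space M \<Longrightarrow>
        x (Suc t) \<omega> \<in> prox \<eta> r (x t \<omega> - \<eta> *\<^sub>R
           (\<Sum>i\<in>{i\<in>{1..n}. \<xi> t i \<omega>}. (1 / (real n * p i)) *\<^sub>R grad i (x t \<omega>)))"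
    and T: "T \<ge> 1"
  shows "ennreal (1 / real T) *
           (\<Sum>t=1..T. \<integral>\<^sup>+ \<omega>. (dist0 (frechet_subdiff F (x (Suc t) \<omega>)))\<^sup>2 \<partial>M)
         \<le> ennreal ((1 + 4*Ltil*\<eta> - 2*Ltil^2*\<eta>^2) / (Ltil*\<eta> - 2*Ltil^2*\<eta>^2)
                     / (real n)^2 * (1 / (real b + real k - real n)) * (\<Sum>i=1..k. G i)^2
                   + (2 + 4*Ltil*\<eta> + 4*Ltil^2*\<eta>^2) / (\<eta> - 2*Ltil*\<eta>^2) / real T
                     * (F x1 - F xstar))"
  proof -
  interpret P: prob_space M by (rule M)
  have n1: "n \<ge> 1" using b_range by auto
  have Gpos: "G i > 0" if "i \<in> {1..n}" for i
    using G_mono[of 1 i] G_pos that by force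
  define c where "c = real b + real k - real n"
  define S where "S = (\<Sum>j=1..k. G j)"
  have c0: "c > 0" using k_cond(1) unfolding c_def .
  have k1: "1 \<le> k" "k \<le> n" using k_range by auto
  have S0: "S > 0" unfolding S_def
    using k1 Gpos by (intro sum_pos) auto
  have p_eq: "p i = (if i \<le> k then c * G i / S else 1)" for i
    using p_def[of i] unfolding c_def S_def .
  have pp: "p i > 0" if "i \<in> {1..n}" for i
    using p_eq[of i] Gpos[OF that] c0 S0 by auto
  define gr where "gr y = (1 / real n) *\<^sub>R (\<Sum>i=1..n. grad i y)" for y
  define \<phi> where "\<phi> y = (1 / real n) * (\<Sum>i=1..n. f i y)" for y
  have Fphi: "F y = \<phi> y + r y" for y unfolding F_def \<phi>_def by simp
  have Fphi': "F = (\<lambda>y. \<phi> y + r y)" using Fphi by auto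
  have dphi: "(\<phi> has_derivative (\<lambda>h. inner (gr y) h)) (at y)" for y
  proof -
    have "((\<lambda>y. (1 / real n) * (\<Sum>i=1..n. f i y)) has_derivative (\<lambda>h. (1 / real n) * (\<Sum>i=1..n. inner (grad i y) h))) (at y)"
      using deriv by (intro has_derivative_mult_right has_derivative_sum) auto
    moreover have "(\<lambda>h. (1 / real n) * (\<Sum>i=1..n. inner (grad i y) h)) = (\<lambda>h. inner (gr y) h)"
      unfolding gr_def by (simp add: inner_sum_left fun_eq_iff)
    ultimately show ?thesis unfolding \<phi>_def[abs_def] by simp
  qed
  have lipg: "norm (gr y - gr z) \<le> Ltil * norm (y - z)" for y z
  proof -
    have "norm (gr y - gr z) = (1 / real n) * norm (\<Sum>i=1..n. grad i y - grad i z)"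
      unfolding gr_def by (simp add: sum_subtractf scaleR_diff_right[symmetric])
    also have "\<dots> \<le> (1 / real n) * (\<Sum>i=1..n. norm (grad i y - grad i z))"
      by (intro mult_left_mono norm_sum) auto
    also have "\<dots> \<le> (1 / real n) * (\<Sum>i=1..n. L i * norm (y - z))"
      by (intro mult_left_mono sum_mono lip) auto
    also have "\<dots> = Ltil * norm (y - z)"
      unfolding Ltil_def by (simp add: sum_distrib_right)
    finally show ?thesis .
  qed
  have gm: "grad i \<in> borel_measurable borel" if "i \<in> {1..n}" for i
  proof -
    have "\<bar>L i\<bar>-lipschitz_on UNIV (grad i)"
      unfolding lipschitz_on_def dist_norm
    proof safe
      fix y z
      have "norm (grad i y - grad i z) \<le> L i * norm (y - z)" by (rule lip[OF that])
      also have "\<dots> \<le> \<bar>L i\<bar> * norm (y - z)" by (intro mult_right_mono) auto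
      finally show "norm (grad i y - grad i z) \<le> \<bar>L i\<bar> * norm (y - z)" .
    qed simp
    then show ?thesis by (intro borel_measurable_continuous_onI lipschitz_on_continuous_on)
  qed
  have grm: "gr \<in> borel_measurable borel"
    unfolding gr_def[abs_def] using gm by (intro borel_measurable_scaleR borel_measurable_sum) auto
  have ifm: "(\<lambda>\<omega>. if \<xi> t i \<omega> then cc else dd) \<in> borel_measurable M"
    if "t \<ge> 1" "i \<in> {1..n}" for t i and cc dd :: real
  proof -
    have "(\<lambda>bb. if bb then cc else dd) \<circ> \<xi> t i \<in> borel_measurable M"
      by (rule measurable_comp[OF sample_rv[OF that]]) simp
    then show ?thesis by (simp add: comp_def)
  qed
  have gxm: "(\<lambda>\<omega>. grad i (x t \<omega>)) \<in> borel_measurable M" if "t \<ge> 1" "i \<in> {1..n}" for t i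
    using measurable_compose[OF iter_rv[OF that(1)] gm[OF that(2)]] .
  have grxm: "(\<lambda>\<omega>. gr (x t \<omega>)) \<in> borel_measurable M" if "t \<ge> 1" for t
    using measurable_compose[OF iter_rv[OF that] grm] .

  define gt where "gt t \<omega> = (\<Sum>i\<in>{i\<in>{1..n}. \<xi> t i \<omega>}. (1 / (real n * p i)) *\<^sub>R grad i (x t \<omega>))" for t \<omega>
  define vt where "vt t \<omega> = gr (x (Suc t) \<omega>) - (1/\<eta>) *\<^sub>R (x (Suc t) \<omega> - (x t \<omega> - \<eta> *\<^sub>R gt t \<omega>))" for t \<omega>
  define et where "et t \<omega> = gt t \<omega> - gr (x t \<omega>)" for t \<omega>
  define \<alpha> where "\<alpha> = (1+Ltil*\<eta>)*(3-2*Ltil*\<eta>)/(1-2*Ltil*\<eta>)"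
  define \<beta> where "\<beta> = 2*(1+Ltil*\<eta>)/(\<eta>*(1-2*Ltil*\<eta>))"
  have sL: "Ltil * \<eta> < 1/2"
  proof -
    have "\<eta> * (2 * Ltil) < 1" using eta Ltil_pos by (simp add: field_simps)
    then show ?thesis by (simp add: field_simps)
  qed
  have gt_eq: "gt t \<omega> = (\<Sum>i\<in>{1..n}. (if \<xi> t i \<omega> then 1 / (real n * p i) else 0) *\<^sub>R grad i (x t \<omega>))" for t \<omega>
    unfolding gt_def by (subst sum.inter_filter) (auto intro!: sum.cong)
  have et_eq: "et t \<omega> = (\<Sum>i\<in>{1..n}. ((if \<xi> t i \<omega> then 1 / p i else 0) - 1) *\<^sub>R ((1 / real n) *\<^sub>R grad i (x t \<omega>)))" for t \<omega>
  proof -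
    have "et t \<omega> = (\<Sum>i\<in>{1..n}. (if \<xi> t i \<omega> then 1 / (real n * p i) else 0) *\<^sub>R grad i (x t \<omega>) - (1 / real n) *\<^sub>R grad i (x t \<omega>))"
      unfolding et_def gt_eq gr_def by (simp add: sum_subtractf scaleR_sum_right)
    also have "\<dots> = (\<Sum>i\<in>{1..n}. ((if \<xi> t i \<omega> then 1 / p i else 0) - 1) *\<^sub>R ((1 / real n) *\<^sub>R grad i (x t \<omega>)))"
    proof (intro sum.cong refl)
      fix i assume i: "i \<in> {1..n}"
      have "1 / (real n * p i) - 1 / real n = (1 / p i - 1) / real n"
        using pp[OF i] n1 by (simp add: field_simps)
      then show "(if \<xi> t i \<omega> then 1 / (real n * p i) else 0) *\<^sub>R grad i (x t \<omega>) - (1 / real n) *\<^sub>R grad i (x t \<omega>)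
          = ((if \<xi> t i \<omega> then 1 / p i else 0) - 1) *\<^sub>R ((1 / real n) *\<^sub>R grad i (x t \<omega>))"
        by (auto simp: scaleR_diff_left[symmetric])
    qed
    finally show ?thesis .
  qed
  have gtm: "gt t \<in> borel_measurable M" if "t \<ge> 1" for t
  proof -
    have "(\<lambda>\<omega>. \<Sum>i\<in>{1..n}. (if \<xi> t i \<omega> then 1 / (real n * p i) else 0) *\<^sub>R grad i (x t \<omega>)) \<in> borel_measurable M"
      using that by (intro borel_measurable_sum borel_measurable_scaleR ifm gxm) auto
    then show ?thesis unfolding gt_eq[abs_def] .
  qed
  have vtm: "vt t \<in> borel_measurable M" if "t \<ge> 1" for t
    unfolding vt_def[abs_def] using that
    by (intro borel_measurable_diff borel_measurable_scaleR borel_measurable_const grxm iter_rv gtm) auto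
  have etm: "et t \<in> borel_measurable M" if "t \<ge> 1" for t
    unfolding et_def[abs_def] using that
    by (intro borel_measurable_diff grxm gtm) auto

  have pw1: "(dist0 (frechet_subdiff F (x (Suc t) \<omega>)))^2 \<le> ennreal ((norm (vt t \<omega>))^2)"
    if t: "t \<ge> 1" and \<omega>: "\<omega> \<in> space M" for t \<omega>
  proof -
    have pr: "x (Suc t) \<omega> \<in> prox \<eta> r (x t \<omega> - \<eta> *\<^sub>R gt t \<omega>)"
      using step[OF t \<omega>] unfolding gt_def .
    have "vt t \<omega> \<in> frechet_subdiff F (x (Suc t) \<omega>)"
      unfolding vt_def Fphi' by (rule frechet_mem[OF dphi pr eta(1)])
    then have "dist0 (frechet_subdiff F (x (Suc t) \<omega>)) \<le> ennreal (norm (vt t \<omega>))"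
      by (rule dist0_le)
    then have "(dist0 (frechet_subdiff F (x (Suc t) \<omega>)))^2 \<le> (ennreal (norm (vt t \<omega>)))^2"
      by (rule power_mono) simp
    then show ?thesis by (simp add: ennreal_power)
  qed

  have pw2: "(norm (vt t \<omega>))^2 \<le> \<alpha> * (norm (et t \<omega>))^2 + \<beta> * (F (x t \<omega>) - F (x (Suc t) \<omega>))"
    if t: "t \<ge> 1" and \<omega>: "\<omega> \<in> space M" for t \<omega>
  proof -
    define xt where "xt = x t \<omega>"
    define xn where "xn = x (Suc t) \<omega>"
    define g where "g = gt t \<omega>"
    define w where "w = xt - \<eta> *\<^sub>R g"
    have pr: "xn \<in> prox \<eta> r w"
      using step[OF t \<omega>] unfolding gt_def xn_def w_def xt_def g_def .
    define d where "d = xn - xt"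
    define e where "e = g - gr xt"
    define a where "a = gr xn - gr xt"
    have e_eq: "et t \<omega> = e" unfolding et_def e_def g_def xt_def ..
    have v_eq: "vt t \<omega> = a - (e + (1/\<eta>) *\<^sub>R d)"
    proof -
      have "(1/\<eta>) *\<^sub>R (xn - (xt - \<eta> *\<^sub>R g)) = (1/\<eta>) *\<^sub>R d + g"
        using eta(1) unfolding d_def by (simp add: algebra_simps)
      then show ?thesis unfolding vt_def a_def e_def xn_def[symmetric] xt_def[symmetric] g_def[symmetric]
        by (simp add: algebra_simps)
    qed
    have na: "norm a \<le> Ltil * norm d" unfolding a_def d_def by (rule lipg)
    have desc: "inner d e + (1/(2*\<eta>) - Ltil/2) * (norm d)^2 \<le> F xt - F xn"
    proof -
      have p1: "(1 / (2*\<eta>)) * (norm (xn - w))^2 + r xn \<le> (1 / (2*\<eta>)) * (norm (xt - w))^2 + r xt"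
        using pr unfolding prox_def by blast
      have xnw: "xn - w = d + \<eta> *\<^sub>R g" unfolding d_def w_def by simp
      have xtw: "xt - w = \<eta> *\<^sub>R g" unfolding w_def by simp
      have sq: "(norm (d + \<eta> *\<^sub>R g))^2 = (norm d)^2 + 2 * (\<eta> * inner d g) + (norm (\<eta> *\<^sub>R g))^2"
        using norm_add_sq[of d "\<eta> *\<^sub>R g"] by simp
      define Q where "Q = (norm (\<eta> *\<^sub>R g))^2"
      have e1: "(1 / (2*\<eta>)) * ((norm d)^2 + 2 * (\<eta> * inner d g) + Q) = (norm d)^2 / (2*\<eta>) + inner d g + Q / (2*\<eta>)"
        using eta(1) by (simp add: field_simps)
      have e2: "(1 / (2*\<eta>)) * Q = Q / (2*\<eta>)" by simp
      have p2: "(norm d)^2 / (2*\<eta>) + inner d g + r xn \<le> r xt"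
        using p1 unfolding xnw xtw sq Q_def[symmetric] e1 e2 by linarith
      have sm: "\<phi> xn \<le> \<phi> xt + inner (gr xt) (xn - xt) + Ltil/2 * (norm (xn - xt))^2"
        by (rule smooth_ub[OF dphi lipg])
      have ie: "inner d e = inner d g - inner (gr xt) d"
        unfolding e_def by (simp add: inner_diff_right inner_commute)
      have e3: "(1/(2*\<eta>) - Ltil/2) * (norm d)^2 = (norm d)^2 / (2*\<eta>) - Ltil/2 * (norm d)^2"
        by (simp add: algebra_simps)
      show ?thesis unfolding Fphi ie e3 using p2 sm unfolding d_def[symmetric] by linarith
    qed
    have V1: "norm (vt t \<omega>) \<le> Ltil * norm d + norm (e + (1/\<eta>) *\<^sub>R d)"
      unfolding v_eq using norm_triangle_ineq4[of a "e + (1/\<eta>) *\<^sub>R d"] na by linarith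
    have U2: "(norm (e + (1/\<eta>) *\<^sub>R d))^2 = (norm e)^2 + (2/\<eta>) * inner d e + (norm d)^2 / \<eta>^2"
    proof -
      have "(norm (e + (1/\<eta>) *\<^sub>R d))^2 = (norm e)^2 + 2 * inner e ((1/\<eta>) *\<^sub>R d) + (norm ((1/\<eta>) *\<^sub>R d))^2"
        by (rule norm_add_sq)
      also have "\<dots> = (norm e)^2 + (2/\<eta>) * inner d e + (norm d)^2 / \<eta>^2"
        using eta(1) by (simp add: inner_commute power_divide)
      finally show ?thesis .
    qed
    have Pb: "- (norm d * norm e) \<le> inner d e"
      using Cauchy_Schwarz_ineq2[of d e] by linarith
    have "(norm (vt t \<omega>))^2 \<le> \<alpha> * (norm e)^2 + \<beta> * (F xt - F xn)"
      unfolding \<alpha>_def \<beta>_def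
      by (rule real_alg[OF Ltil_pos eta(1) sL norm_ge_zero V1 norm_ge_zero norm_ge_zero norm_ge_zero U2 Pb desc])
    then show ?thesis unfolding e_eq xt_def xn_def .
  qed

  define V where "V = (1 / (real n)^2) * (1 / c) * S^2"
  define Vb where "Vb = (\<Sum>i\<in>{1..n}. (1 / p i - 1) * (G i / real n)^2)"
  define \<Delta> where "\<Delta> = F x1 - F xstar"
  have \<Delta>0: "\<Delta> \<ge> 0" unfolding \<Delta>_def using xstar_min[of x1] by simp
  have p1: "p i \<le> 1" if "i \<in> {1..n}" for i
    using sample_prob[OF order_refl that] P.prob_le_1 by metis
  have Vb0: "Vb \<ge> 0" unfolding Vb_def
    using p1 pp by (intro sum_nonneg mult_nonneg_nonneg) (auto simp: field_simps)
  have VbV: "Vb \<le> V"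
  proof -
    have "Vb \<le> (\<Sum>i\<in>{1..n}. if i \<le> k then S * G i / (c * (real n)^2) else 0)"
      unfolding Vb_def
    proof (intro sum_mono)
      fix i assume i: "i \<in> {1..n}"
      show "(1 / p i - 1) * (G i / real n)^2 \<le> (if i \<le> k then S * G i / (c * (real n)^2) else 0)"
      proof (cases "i \<le> k")
        case True
        then have pi: "p i = c * G i / S" using p_eq[of i] by simp
        have "(1 / p i - 1) * (G i / real n)^2 \<le> (1 / p i) * (G i / real n)^2"
          by (intro mult_right_mono) auto
        also have "\<dots> = S * G i / (c * (real n)^2)"
        proof -
          have G0: "G i \<noteq> 0" using Gpos[OF i] by simp
          have c00: "c \<noteq> 0" using c0 by simp
          have S00: "S \<noteq> 0" using S0 by simp
          have n0: "real n \<noteq> 0" using n1 by simp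
          have "1 / p i = S / (c * G i)" unfolding pi by simp
          moreover have "(G i / real n)^2 = G i * G i / (real n * real n)"
            by (simp add: power2_eq_square)
          moreover have "S / (c * G i) * (G i * G i / (real n * real n)) = S * G i / (c * (real n * real n))"
            using G0 c00 n0 by (simp add: divide_simps)
          ultimately show ?thesis by (simp add: power2_eq_square)
        qed
        finally show ?thesis using True by simp
      next
        case False
        then show ?thesis using p_eq[of i] by simp
      qed
    qed
    also have "\<dots> = (\<Sum>i\<in>{1..k}. S * G i / (c * (real n)^2))"
    proof -
      have e: "{1..k} = {i\<in>{1..n}. i \<le> k}" using k1 by auto
      show ?thesis unfolding e by (rule sum.inter_filter[OF finite_atLeastAtMost, symmetric])
    qed
    also have "\<dots> = V"
    proof -
      have "(\<Sum>i\<in>{1..k}. S * G i / (c * (real n)^2)) = (\<Sum>i\<in>{1..k}. (S / (c * (real n)^2)) * G i)"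
        by (intro sum.cong refl) simp
      also have "\<dots> = (S / (c * (real n)^2)) * S"
      proof -
        have sS: "(\<Sum>i\<in>{1..k}. G i) = S" unfolding S_def ..
        show ?thesis by (simp only: sum_distrib_left[symmetric] sS)
      qed
      also have "\<dots> = V" unfolding V_def by (simp add: power2_eq_square)
      finally show ?thesis .
    qed
    finally show ?thesis .
  qed
  have var: "(\<integral>\<^sup>+\<omega>. ennreal ((norm (et t \<omega>))^2) \<partial>M) \<le> ennreal Vb" if t: "t \<ge> 1" for t
  proof -
    define A where "A = (\<lambda>\<omega>. \<lambda>i\<in>{1..n}. \<xi> t i \<omega>)"
    define Bf where "Bf = (\<lambda>\<omega>. ((\<lambda>s\<in>{1..<t}. \<lambda>i\<in>{1..n}. \<xi> s i \<omega>), (\<lambda>s\<in>{1..t}. x s \<omega>)))"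
    define MA where "MA = PiM {1..n} (\<lambda>_. count_space (UNIV::bool set))"
    define MB where "MB = PiM {1..<t} (\<lambda>_. MA) \<Otimes>\<^sub>M PiM {1..t} (\<lambda>_. (borel :: 'a measure))"
    have ind0: "P.indep_set (sets (vimage_algebra (space M) A MA)) (sets (vimage_algebra (space M) Bf MB))"
      using past_indep[OF t] unfolding A_def Bf_def MA_def MB_def .
    have ind1: "P.indep_set (sigma_sets (space M) {A -` C \<inter> space M | C. C \<in> sets MA})
                            (sigma_sets (space M) {Bf -` C \<inter> space M | C. C \<in> sets MB})"
      using ind0 unfolding sets_vimage_algebra .
    have Am: "A \<in> measurable M MA"
      unfolding A_def MA_def using sample_rv[OF t] by (intro measurable_restrict) auto
    have Bm: "Bf \<in> measurable M MB"
      unfolding Bf_def MB_def MA_def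
      using sample_rv iter_rv
      by (intro measurable_Pair measurable_restrict) auto
    have Y1: "(\<lambda>a. a) \<in> measurable MA MA" by simp
    have Y2: "(\<lambda>pr. snd pr t) \<in> measurable MB borel"
    proof -
      have "(\<lambda>f. f t) \<circ> snd \<in> measurable MB borel"
        unfolding MB_def using t
        by (intro measurable_comp[OF measurable_snd] measurable_component_singleton) auto
      then show ?thesis by (simp add: comp_def)
    qed
    have ind2: "P.indep_set (sigma_sets (space M) {(\<lambda>\<omega>. A \<omega>) -` C \<inter> space M | C. C \<in> sets MA})
                            (sigma_sets (space M) {(\<lambda>\<omega>. snd (Bf \<omega>) t) -` C \<inter> space M | C. C \<in> sets borel})"
      by (rule P.indep_set_compose[OF ind1 Am Bm Y1 Y2])
    have xe: "(\<lambda>\<omega>. snd (Bf \<omega>) t) = x t" unfolding Bf_def using t by auto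
    have indX: "P.indep_set (sigma_sets (space M) {(\<lambda>\<omega>. \<lambda>i\<in>{1..n}. \<xi> t i \<omega>) -` C \<inter> space M | C. C \<in> sets (PiM {1..n} (\<lambda>_. count_space UNIV))})
                            (sigma_sets (space M) {x t -` C \<inter> space M | C. C \<in> sets borel})"
      using ind2 unfolding xe A_def MA_def by simp
    have "(\<integral>\<^sup>+\<omega>. ennreal ((norm (\<Sum>i\<in>{1..n}. ((if \<xi> t i \<omega> then 1 / p i else 0) - 1) *\<^sub>R ((1 / real n) *\<^sub>R grad i (x t \<omega>))))^2) \<partial>M)
          \<le> ennreal (\<Sum>i\<in>{1..n}. (1 / p i - 1) * (G i / real n)^2)"
    proof (rule P.var_bound[where \<xi>="\<lambda>i. \<xi> t i" and X="x t" and \<gamma>="\<lambda>i y. (1 / real n) *\<^sub>R grad i y" and B="\<lambda>i. G i / real n" and p=p and I="{1..n}"])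
      show "P.indep_vars (\<lambda>_. count_space UNIV) (\<lambda>i. \<xi> t i) {1..n}" by (rule sample_indep[OF t])
      show "finite {1..n}" by simp
      show "measure M {\<omega> \<in> space M. \<xi> t i \<omega>} = p i" if "i \<in> {1..n}" for i by (rule sample_prob[OF t that])
      show "p i > 0" if "i \<in> {1..n}" for i by (rule pp[OF that])
      show "x t \<in> borel_measurable M" by (rule iter_rv[OF t])
      show "(\<lambda>y. (1 / real n) *\<^sub>R grad i y) \<in> borel_measurable borel" if "i \<in> {1..n}" for i
        using gm[OF that] by (intro borel_measurable_scaleR) auto
      show "norm ((1 / real n) *\<^sub>R grad i y) \<le> G i / real n" if "i \<in> {1..n}" for i y
        using grad_bd[OF that, of y] n1 by (simp add: divide_right_mono)
    qed (rule indX)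
    then show ?thesis unfolding et_eq Vb_def .
  qed
  have sum_pw: "(\<Sum>t=1..T. (norm (vt t \<omega>))^2) \<le> \<alpha> * (\<Sum>t=1..T. (norm (et t \<omega>))^2) + \<beta> * \<Delta>"
    if \<omega>: "\<omega> \<in> space M" for \<omega>
  proof -
    have \<beta>0: "\<beta> \<ge> 0" unfolding \<beta>_def using sL eta(1) Ltil_pos by (intro divide_nonneg_pos mult_pos_pos) auto
    have "(\<Sum>t=1..T. (norm (vt t \<omega>))^2) \<le> (\<Sum>t=1..T. \<alpha> * (norm (et t \<omega>))^2 + \<beta> * (F (x t \<omega>) - F (x (Suc t) \<omega>)))"
      using pw2 \<omega> by (intro sum_mono) auto
    also have "\<dots> = \<alpha> * (\<Sum>t=1..T. (norm (et t \<omega>))^2) + \<beta> * (\<Sum>t=1..T. F (x t \<omega>) - F (x (Suc t) \<omega>))"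
      by (simp add: sum.distrib sum_distrib_left)
    finally have a1: "(\<Sum>t=1..T. (norm (vt t \<omega>))^2) \<le> \<alpha> * (\<Sum>t=1..T. (norm (et t \<omega>))^2) + \<beta> * (\<Sum>t=1..T. F (x t \<omega>) - F (x (Suc t) \<omega>))" .
    have "(\<Sum>t=1..T. F (x t \<omega>) - F (x (Suc t) \<omega>)) = F (x 1 \<omega>) - F (x (Suc T) \<omega>)"
      by (rule telescope_real)
    also have "\<dots> \<le> \<Delta>" unfolding \<Delta>_def init[OF \<omega>] using xstar_min[of "x (Suc T) \<omega>"] by simp
    finally have "\<beta> * (\<Sum>t=1..T. F (x t \<omega>) - F (x (Suc t) \<omega>)) \<le> \<beta> * \<Delta>"
      using \<beta>0 by (rule mult_left_mono)
    then show ?thesis using a1 by linarith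
  qed
  have \<alpha>0: "\<alpha> \<ge> 0" unfolding \<alpha>_def using sL eta(1) Ltil_pos
    by (intro divide_nonneg_pos mult_nonneg_nonneg) auto
  have \<beta>0: "\<beta> \<ge> 0" unfolding \<beta>_def using sL eta(1) Ltil_pos by (intro divide_nonneg_pos mult_pos_pos) auto
  have vsm: "(\<lambda>\<omega>. ennreal ((norm (vt t \<omega>))^2)) \<in> borel_measurable M" if "t \<in> {1..T}" for t
  proof -
    have "(\<lambda>v::'a. ennreal ((norm v)^2)) \<in> borel_measurable borel" by measurable
    moreover have "t \<ge> 1" using that by simp
    ultimately show ?thesis using measurable_compose[OF vtm] by blast
  qed
  have esm: "(\<lambda>\<omega>. ennreal ((norm (et t \<omega>))^2)) \<in> borel_measurable M" if "t \<in> {1..T}" for t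
  proof -
    have "(\<lambda>v::'a. ennreal ((norm v)^2)) \<in> borel_measurable borel" by measurable
    moreover have "t \<ge> 1" using that by simp
    ultimately show ?thesis using measurable_compose[OF etm] by blast
  qed
  have "(\<Sum>t=1..T. \<integral>\<^sup>+ \<omega>. (dist0 (frechet_subdiff F (x (Suc t) \<omega>)))\<^sup>2 \<partial>M)
        \<le> (\<Sum>t=1..T. \<integral>\<^sup>+ \<omega>. ennreal ((norm (vt t \<omega>))^2) \<partial>M)"
    by (intro sum_mono nn_integral_mono pw1) auto
  also have "\<dots> = (\<integral>\<^sup>+ \<omega>. (\<Sum>t=1..T. ennreal ((norm (vt t \<omega>))^2)) \<partial>M)"
    by (rule nn_integral_sum[symmetric]) (rule vsm)
  also have "\<dots> \<le> (\<integral>\<^sup>+ \<omega>. (ennreal \<alpha> * (\<Sum>t=1..T. ennreal ((norm (et t \<omega>))^2)) + ennreal (\<beta> * \<Delta>)) \<partial>M)"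
  proof (rule nn_integral_mono)
    fix \<omega> assume \<omega>: "\<omega> \<in> space M"
    have "(\<Sum>t=1..T. ennreal ((norm (vt t \<omega>))^2)) = ennreal (\<Sum>t=1..T. (norm (vt t \<omega>))^2)"
      by (rule sum_ennreal) simp
    also have "\<dots> \<le> ennreal (\<alpha> * (\<Sum>t=1..T. (norm (et t \<omega>))^2) + \<beta> * \<Delta>)"
      by (rule ennreal_leI[OF sum_pw[OF \<omega>]])
    also have "\<dots> = ennreal \<alpha> * (\<Sum>t=1..T. ennreal ((norm (et t \<omega>))^2)) + ennreal (\<beta> * \<Delta>)"
      using \<alpha>0 \<beta>0 \<Delta>0 by (simp add: ennreal_plus ennreal_mult sum_nonneg)
    finally show "(\<Sum>t=1..T. ennreal ((norm (vt t \<omega>))^2)) \<le> ennreal \<alpha> * (\<Sum>t=1..T. ennreal ((norm (et t \<omega>))^2)) + ennreal (\<beta> * \<Delta>)" .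
  qed
  also have "\<dots> = ennreal \<alpha> * (\<Sum>t=1..T. \<integral>\<^sup>+ \<omega>. ennreal ((norm (et t \<omega>))^2) \<partial>M) + ennreal (\<beta> * \<Delta>)"
  proof -
    have m1: "(\<lambda>\<omega>. \<Sum>t=1..T. ennreal ((norm (et t \<omega>))^2)) \<in> borel_measurable M"
      using esm by (intro borel_measurable_sum) auto
    have "(\<integral>\<^sup>+ \<omega>. (ennreal \<alpha> * (\<Sum>t=1..T. ennreal ((norm (et t \<omega>))^2)) + ennreal (\<beta> * \<Delta>)) \<partial>M)
        = (\<integral>\<^sup>+ \<omega>. ennreal \<alpha> * (\<Sum>t=1..T. ennreal ((norm (et t \<omega>))^2)) \<partial>M) + (\<integral>\<^sup>+ \<omega>. ennreal (\<beta> * \<Delta>) \<partial>M)"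
      using m1 by (intro nn_integral_add) auto
    also have "(\<integral>\<^sup>+ \<omega>. ennreal \<alpha> * (\<Sum>t=1..T. ennreal ((norm (et t \<omega>))^2)) \<partial>M)
        = ennreal \<alpha> * (\<integral>\<^sup>+ \<omega>. (\<Sum>t=1..T. ennreal ((norm (et t \<omega>))^2)) \<partial>M)"
      using m1 by (rule nn_integral_cmult)
    also have "(\<integral>\<^sup>+ \<omega>. (\<Sum>t=1..T. ennreal ((norm (et t \<omega>))^2)) \<partial>M) = (\<Sum>t=1..T. \<integral>\<^sup>+ \<omega>. ennreal ((norm (et t \<omega>))^2) \<partial>M)"
      by (rule nn_integral_sum) (rule esm)
    also have "(\<integral>\<^sup>+ \<omega>. ennreal (\<beta> * \<Delta>) \<partial>M) = ennreal (\<beta> * \<Delta>)"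
      by (simp add: P.emeasure_space_1)
    finally show ?thesis .
  qed
  also have "\<dots> \<le> ennreal \<alpha> * (\<Sum>t=1..T. ennreal Vb) + ennreal (\<beta> * \<Delta>)"
    using var by (intro add_mono mult_left_mono sum_mono order_refl) auto
  also have "\<dots> = ennreal (\<alpha> * (real T * Vb) + \<beta> * \<Delta>)"
    using \<alpha>0 \<beta>0 \<Delta>0 Vb0 by (simp add: ennreal_plus ennreal_mult ennreal_of_nat_eq_real_of_nat)
  finally have main: "(\<Sum>t=1..T. \<integral>\<^sup>+ \<omega>. (dist0 (frechet_subdiff F (x (Suc t) \<omega>)))\<^sup>2 \<partial>M)
        \<le> ennreal (\<alpha> * (real T * Vb) + \<beta> * \<Delta>)" .
  define C1 where "C1 = (1 + 4*Ltil*\<eta> - 2*Ltil^2*\<eta>^2) / (Ltil*\<eta> - 2*Ltil^2*\<eta>^2)"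
  define C2 where "C2 = (2 + 4*Ltil*\<eta> + 4*Ltil^2*\<eta>^2) / (\<eta> - 2*Ltil*\<eta>^2)"
  have \<alpha>C1: "\<alpha> \<le> C1"
  proof -
    define sg where "sg = Ltil * \<eta>"
    have s0: "0 < sg" unfolding sg_def using Ltil_pos eta(1) by simp
    have s1: "0 < 1 - 2 * sg" unfolding sg_def using sL by simp
    have C1e: "C1 = (1 + 4 * sg - 2 * sg^2) / (sg * (1 - 2 * sg))"
      unfolding C1_def sg_def by (simp add: power2_eq_square algebra_simps)
    have \<alpha>e: "\<alpha> = (1 + sg) * (3 - 2 * sg) / (1 - 2 * sg)"
      unfolding \<alpha>_def sg_def by (simp add: algebra_simps)
    have key: "sg * ((1 + sg) * (3 - 2 * sg)) \<le> 1 + 4 * sg - 2 * sg^2"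
    proof -
      have h: "sg < 1/2" using s1 by simp
      have "sg * sg < sg * (1/2)" by (rule mult_strict_left_mono[OF h s0])
      then have "sg^2 < 1/4" using h by (simp add: power2_eq_square)
      moreover have "0 \<le> sg^3" using s0 by simp
      moreover have "sg * ((1 + sg) * (3 - 2 * sg)) = 3 * sg + sg^2 - 2 * sg^3"
        by (simp add: algebra_simps power2_eq_square power3_eq_cube)
      ultimately show ?thesis using s0 by linarith
    qed
    have "(1 + sg) * (3 - 2 * sg) / (1 - 2 * sg) = (sg * ((1 + sg) * (3 - 2 * sg))) / (sg * (1 - 2 * sg))"
      using s0 by simp
    also have "\<dots> \<le> (1 + 4 * sg - 2 * sg^2) / (sg * (1 - 2 * sg))"
      using key s0 s1 by (intro divide_right_mono) auto
    finally show ?thesis unfolding C1e \<alpha>e .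
  qed
  have \<beta>C2: "\<beta> \<le> C2"
  proof -
    define sg where "sg = Ltil * \<eta>"
    have s0: "0 < sg" unfolding sg_def using Ltil_pos eta(1) by simp
    have s1: "0 < 1 - 2 * sg" unfolding sg_def using sL by simp
    have C2e: "C2 = (2 + 4 * sg + 4 * sg^2) / (\<eta> * (1 - 2 * sg))"
      unfolding C2_def sg_def by (simp add: power2_eq_square algebra_simps)
    have \<beta>e: "\<beta> = (2 + 2 * sg) / (\<eta> * (1 - 2 * sg))"
      unfolding \<beta>_def sg_def by (simp add: algebra_simps)
    have "2 + 2 * sg \<le> 2 + 4 * sg + 4 * sg^2" using s0 by simp
    then show ?thesis unfolding C2e \<beta>e using s1 eta(1) by (intro divide_right_mono) auto
  qed
  have T0: "real T > 0" using T by simp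
  have fin: "(\<alpha> * (real T * Vb) + \<beta> * \<Delta>) / real T \<le> C1 / (real n)^2 * (1 / c) * S^2 + C2 / real T * \<Delta>"
  proof -
    have "(\<alpha> * (real T * Vb) + \<beta> * \<Delta>) / real T = \<alpha> * Vb + \<beta> * \<Delta> / real T"
      using T0 by (simp add: field_simps)
    also have "\<dots> \<le> C1 * V + C2 * \<Delta> / real T"
    proof (intro add_mono divide_right_mono mult_mono)
      show "\<alpha> \<le> C1" by (rule \<alpha>C1)
      show "\<beta> \<le> C2" by (rule \<beta>C2)
    qed (use Vb0 VbV \<Delta>0 T0 \<alpha>0 \<alpha>C1 \<beta>0 \<beta>C2 in auto)
    also have "\<dots> = C1 / (real n)^2 * (1 / c) * S^2 + C2 / real T * \<Delta>"
      unfolding V_def by simp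
    finally show ?thesis .
  qed
  have "ennreal (1 / real T) * (\<Sum>t=1..T. \<integral>\<^sup>+ \<omega>. (dist0 (frechet_subdiff F (x (Suc t) \<omega>)))\<^sup>2 \<partial>M)
      \<le> ennreal (1 / real T) * ennreal (\<alpha> * (real T * Vb) + \<beta> * \<Delta>)"
    using main by (rule mult_left_mono) simp
  also have "\<dots> = ennreal ((\<alpha> * (real T * Vb) + \<beta> * \<Delta>) / real T)"
  proof -
    have X0: "0 \<le> \<alpha> * (real T * Vb) + \<beta> * \<Delta>" using \<alpha>0 \<beta>0 Vb0 \<Delta>0 by simp
    have "ennreal (1 / real T) * ennreal (\<alpha> * (real T * Vb) + \<beta> * \<Delta>) = ennreal (1 / real T * (\<alpha> * (real T * Vb) + \<beta> * \<Delta>))"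
      by (rule ennreal_mult[symmetric]) (use X0 in simp_all)
    then show ?thesis by simp
  qed
  also have "\<dots> \<le> ennreal (C1 / (real n)^2 * (1 / c) * S^2 + C2 / real T * \<Delta>)"
    by (rule ennreal_leI[OF fin])
  finally show ?thesis unfolding C1_def C2_def c_def S_def \<Delta>_def .
qed

end
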